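(* Let $\widetilde{\Sigma}_1,\ldots,\widetilde{\Sigma}_n$ be pairwise disjoint visibly pushdown alphabets and $\widetilde{\Sigma}=\widetilde{\Sigma}_1\uplus\cdots\uplus\widetilde{\Sigma}_n$. If $L_i\subseteq\widetilde{\Sigma}_i^*$ is a visibly pushdown language for each $i$, then the well-nested shuffle $L_1\bowtie\cdots\bowtie L_n$ is a visibly pushdown language over $\widetilde{\Sigma}$.
   Context: A visibly pushdown (VP) alphabet is a finite alphabet partitioned into calls, returns and internals; $\widetilde{\Sigma}$ has as calls/returns/internals the unions of those of the $\widetilde{\Sigma}_i$. A visibly pushdown automaton is a pushdown automaton with bottom symbol $\bot$ that pushes one non-$\bot$ symbol on each call, pops the top symbol on each return (reading $\bot$ on empty stack without removing it), and does not touch the stack on internals; a visibly pushdown language is one accepted by such an automaton. In a word, calls and returns are matched like opening and closing parentheses (internals ignored). A word over $\widetilde{\Sigma}$ is well-nested if every matched call–return pair consists of two letters from the same $\widetilde{\Sigma}_k$. The shuffle $L_1\parallel\cdots\parallel L_n$ is $\{w\in\widetilde{\Sigma}^*:\Pi_{\widetilde{\Sigma}_i}(w)\in L_i\text{ for all }i\}$, where $\Pi_{\widetilde{\Sigma}_i}$ erases letters not in $\widetilde{\Sigma}_i$; the well-nested shuffle $L_1\bowtie\cdots\bowtie L_n$ is the set of well-nested words in $L_1\parallel\cdots\parallel L_n$. *)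

theory Defs
  imports Main
begin

type_synonym 'a vpalph = "'a set \<times> 'a set \<times> 'a set"

definition calls :: "'a vpalph \<Rightarrow> 'a set" where "calls S = fst S"
definition rets :: "'a vpalph \<Rightarrow> 'a set" where "rets S = fst (snd S)"
definition ints :: "'a vpalph \<Rightarrow> 'a set" where "ints S = snd (snd S)"
definition letters :: "'a vpalph \<Rightarrow> 'a set" where
  "letters S = calls S \<union> rets S \<union> ints S"

definition vp_alphabet :: "'a vpalph \<Rightarrow> bool" where
  "vp_alphabet S \<longleftrightarrow> finite (letters S) \<and>
     calls S \<inter> rets S = {} \<and> calls S \<inter> ints S = {} \<and> rets S \<inter> ints S = {}"

definition union_alph :: "nat \<Rightarrow> (nat \<Rightarrow> 'a vpalph) \<Rightarrow> 'a vpalph" where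
  "union_alph n S = ((\<Union>i<n. calls (S i)), (\<Union>i<n. rets (S i)), (\<Union>i<n. ints (S i)))"

text \<open>States and (non-bottom) stack symbols are natural numbers (w.l.o.g.); the stack
  is a list of non-bottom symbols, the empty list standing for the stack containing only
  the bottom symbol; in return transitions, \<open>None\<close> denotes the bottom symbol.\<close>
record 'a vpa =
  states :: "nat set"
  init :: "nat set"
  final :: "nat set"
  stack :: "nat set"
  dcall :: "(nat \<times> 'a \<times> nat \<times> nat) set"
  dret :: "(nat \<times> 'a \<times> nat option \<times> nat) set"
  dint :: "(nat \<times> 'a \<times> nat) set"

definition vpa_wf :: "'a vpalph \<Rightarrow> 'a vpa \<Rightarrow> bool" where
  "vpa_wf S A \<longleftrightarrow> finite (states A) \<and> finite (stack A) \<and>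
     init A \<subseteq> states A \<and> final A \<subseteq> states A \<and>
     (\<forall>(q,a,q',g) \<in> dcall A. q \<in> states A \<and> a \<in> calls S \<and> q' \<in> states A \<and> g \<in> stack A) \<and>
     (\<forall>(q,a,g,q') \<in> dret A. q \<in> states A \<and> a \<in> rets S \<and> q' \<in> states A \<and>
         (\<forall>h. g = Some h \<longrightarrow> h \<in> stack A)) \<and>
     (\<forall>(q,a,q') \<in> dint A. q \<in> states A \<and> a \<in> ints S \<and> q' \<in> states A)"

definition vpa_step :: "'a vpalph \<Rightarrow> 'a vpa \<Rightarrow> 'a \<Rightarrow> nat \<times> nat list \<Rightarrow> nat \<times> nat list \<Rightarrow> bool" where
  "vpa_step S A a c c' \<longleftrightarrow>
     (a \<in> calls S \<and> (\<exists>g. (fst c, a, fst c', g) \<in> dcall A \<and> snd c' = g # snd c)) \<or>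
     (a \<in> rets S \<and> ((snd c = [] \<and> snd c' = [] \<and> (fst c, a, None, fst c') \<in> dret A) \<or>
                    (\<exists>g. snd c = g # snd c' \<and> (fst c, a, Some g, fst c') \<in> dret A))) \<or>
     (a \<in> ints S \<and> (fst c, a, fst c') \<in> dint A \<and> snd c' = snd c)"

fun vpa_run :: "'a vpalph \<Rightarrow> 'a vpa \<Rightarrow> 'a list \<Rightarrow> nat \<times> nat list \<Rightarrow> nat \<times> nat list \<Rightarrow> bool" where
  "vpa_run S A [] c c' \<longleftrightarrow> c' = c"
| "vpa_run S A (a # w) c c' \<longleftrightarrow> (\<exists>c''. vpa_step S A a c c'' \<and> vpa_run S A w c'' c')"

definition vpa_lang :: "'a vpalph \<Rightarrow> 'a vpa \<Rightarrow> 'a list set" where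
  "vpa_lang S A = {w. \<exists>q0 \<in> init A. \<exists>qf \<in> final A. \<exists>s. vpa_run S A w (q0, []) (qf, s)}"

definition vpl :: "'a vpalph \<Rightarrow> 'a list set \<Rightarrow> bool" where
  "vpl S L \<longleftrightarrow> (\<exists>A. vpa_wf S A \<and> vpa_lang S A = L)"

inductive well_matched :: "'a vpalph \<Rightarrow> 'a list \<Rightarrow> bool" for S where
  wm_nil: "well_matched S []"
| wm_int: "a \<in> ints S \<Longrightarrow> well_matched S w \<Longrightarrow> well_matched S (a # w)"
| wm_pair: "a \<in> calls S \<Longrightarrow> b \<in> rets S \<Longrightarrow> well_matched S u \<Longrightarrow> well_matched S v \<Longrightarrow>
            well_matched S (a # u @ b # v)"

definition matched :: "'a vpalph \<Rightarrow> 'a list \<Rightarrow> nat \<Rightarrow> nat \<Rightarrow> bool" where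
  "matched S w i j \<longleftrightarrow> i < j \<and> j < length w \<and> w ! i \<in> calls S \<and> w ! j \<in> rets S \<and>
     well_matched S (take (j - i - 1) (drop (i + 1) w))"

definition well_nested :: "nat \<Rightarrow> (nat \<Rightarrow> 'a vpalph) \<Rightarrow> 'a list \<Rightarrow> bool" where
  "well_nested n S w \<longleftrightarrow> (\<forall>i j. matched (union_alph n S) w i j \<longrightarrow>
      (\<exists>k<n. w ! i \<in> letters (S k) \<and> w ! j \<in> letters (S k)))"

definition shuffle :: "nat \<Rightarrow> (nat \<Rightarrow> 'a vpalph) \<Rightarrow> (nat \<Rightarrow> 'a list set) \<Rightarrow> 'a list set" where
  "shuffle n S L = {w \<in> lists (letters (union_alph n S)).
      \<forall>i<n. filter (\<lambda>a. a \<in> letters (S i)) w \<in> L i}"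

definition wn_shuffle :: "nat \<Rightarrow> (nat \<Rightarrow> 'a vpalph) \<Rightarrow> (nat \<Rightarrow> 'a list set) \<Rightarrow> 'a list set" where
  "wn_shuffle n S L = {w \<in> shuffle n S L. well_nested n S w}"

end

theory Submission
  imports Defs "HOL-Library.Countable"
begin

lemma vpa_run_append:
  "vpa_run S A (u @ v) c c' \<longleftrightarrow> (\<exists>c''. vpa_run S A u c c'' \<and> vpa_run S A v c'' c')"
  by (induction u arbitrary: c) auto

lemma wm_append:
  "well_matched S u \<Longrightarrow> well_matched S v \<Longrightarrow> well_matched S (u @ v)"
  by (induction u rule: well_matched.induct) (auto intro: well_matched.intros)

lemma wm_stack:
  assumes "well_matched S u"
    and d1: "calls S \<inter> rets S = {}" and d2: "calls S \<inter> ints S = {}" and d3: "rets S \<inter> ints S = {}"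
  shows "vpa_run S A u c c' \<Longrightarrow> snd c' = snd c"
  using assms(1)
proof (induction u arbitrary: c c' rule: well_matched.induct)
  case wm_nil
  then show ?case by simp
next
  case (wm_int a w)
  then obtain c1 where s: "vpa_step S A a c c1" and r: "vpa_run S A w c1 c'" by auto
  from s wm_int.hyps d2 d3 have "snd c1 = snd c" unfolding vpa_step_def by blast
  with wm_int.IH r show ?case by simp
next
  case (wm_pair a b u v)
  then obtain c1 c2 c3 where s1: "vpa_step S A a c c1" and r1: "vpa_run S A u c1 c2"
    and s2: "vpa_step S A b c2 c3" and r2: "vpa_run S A v c3 c'"
    by (auto simp: vpa_run_append)
  from s1 wm_pair.hyps(1) d1 d2 obtain g where g: "snd c1 = g # snd c"
    unfolding vpa_step_def by blast
  from wm_pair.IH(1)[OF r1] g have "snd c2 = g # snd c" by simp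
  with s2 wm_pair.hyps(2) d1 d3 have "snd c3 = snd c"
    unfolding vpa_step_def by auto
  with wm_pair.IH(2)[OF r2] show ?case by simp
qed


definition stepf :: "'a vpalph \<Rightarrow> 'a \<Rightarrow> 'a list \<Rightarrow> 'a list" where
  "stepf S a s = (if a \<in> calls S then a # s else if a \<in> rets S then tl s else s)"

lemma fold_snoc: "fold f (xs @ [x]) s = f x (fold f xs s)"
  by simp

lemma pending_decomp:
  "set x \<subseteq> letters S \<Longrightarrow> fold (stepf S) x [] = c # rest \<Longrightarrow>
   \<exists>x1 u. x = x1 @ c # u \<and> well_matched S u \<and> c \<in> calls S \<and> fold (stepf S) x1 [] = rest"
proof (induction "length x" arbitrary: x c rest rule: less_induct)
  case less
  show ?case
  proof (cases x rule: rev_cases)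
    case Nil
    with less.prems show ?thesis by simp
  next
    case (snoc y a)
    have ya: "set y \<subseteq> letters S" "a \<in> letters S" using less.prems(1) snoc by auto
    have F: "fold (stepf S) x [] = stepf S a (fold (stepf S) y [])" using snoc by simp
    show ?thesis
    proof (cases "a \<in> calls S")
      case True
      then show ?thesis using F less.prems(2) snoc
        by (intro exI[of _ y] exI[of _ "[]"]) (auto simp: stepf_def intro: wm_nil)
    next
      case nc: False
      show ?thesis
      proof (cases "a \<in> rets S")
        case True
        with nc F less.prems(2) have "tl (fold (stepf S) y []) = c # rest" by (simp add: stepf_def)
        then obtain d where dy: "fold (stepf S) y [] = d # c # rest"
          by (cases "fold (stepf S) y []") auto
        from less.hyps[of y d "c # rest"] snoc ya dy obtain y1 u1 where
          y1: "y = y1 @ d # u1" "well_matched S u1" "d \<in> calls S" "fold (stepf S) y1 [] = c # rest"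
          by auto
        from less.hyps[of y1 c rest] y1 snoc ya obtain y2 u2 where
          y2: "y1 = y2 @ c # u2" "well_matched S u2" "c \<in> calls S" "fold (stepf S) y2 [] = rest"
          by auto
        have "well_matched S (d # u1 @ a # [])"
          using y1(2,3) True by (intro wm_pair wm_nil)
        then have "well_matched S (u2 @ d # u1 @ [a])"
          using y2(2) wm_append by fastforce
        then show ?thesis using snoc y1 y2
          by (intro exI[of _ y2] exI[of _ "u2 @ d # u1 @ [a]"]) auto
      next
        case nr: False
        with nc ya have ai: "a \<in> ints S" by (auto simp: letters_def)
        from nc nr F less.prems(2) have "fold (stepf S) y [] = c # rest" by (simp add: stepf_def)
        from less.hyps[of y c rest] this snoc ya obtain y1 u1 where
          y1: "y = y1 @ c # u1" "well_matched S u1" "c \<in> calls S" "fold (stepf S) y1 [] = rest"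
          by auto
        have "well_matched S (u1 @ [a])" using y1(2) ai by (intro wm_append wm_int wm_nil)
        then show ?thesis using snoc y1 by (intro exI[of _ y1] exI[of _ "u1 @ [a]"]) auto
      qed
    qed
  qed
qed


locale prodvpa =
  fixes n :: nat and S :: "nat \<Rightarrow> 'a vpalph" and A :: "nat \<Rightarrow> 'a vpa"
  assumes alph: "\<And>i. i < n \<Longrightarrow> vp_alphabet (S i)"
    and disj: "\<And>i j. i < n \<Longrightarrow> j < n \<Longrightarrow> i \<noteq> j \<Longrightarrow> letters (S i) \<inter> letters (S j) = {}"
    and wf: "\<And>i. i < n \<Longrightarrow> vpa_wf (S i) (A i)"
begin

abbreviation Sig where "Sig \<equiv> union_alph n S"

definition Q :: "nat list set" where
  "Q = {qs. length qs = n \<and> (\<forall>i<n. qs ! i \<in> states (A i))}"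

definition enc :: "nat list \<Rightarrow> nat" where "enc = to_nat"
definition encs :: "nat \<times> nat \<Rightarrow> nat" where "encs = to_nat"

lemma enc_eq[simp]: "enc x = enc y \<longleftrightarrow> x = y" by (simp add: enc_def)
lemma encs_eq[simp]: "encs x = encs y \<longleftrightarrow> x = y" by (simp add: encs_def)
lemma inj_encs[simp]: "inj encs" by (simp add: encs_def)

definition P :: "'a vpa" where
  "P = \<lparr>states = enc ` Q,
        init = enc ` {qs \<in> Q. \<forall>i<n. qs ! i \<in> init (A i)},
        final = enc ` {qs \<in> Q. \<forall>i<n. qs ! i \<in> final (A i)},
        stack = encs ` {(i, g). i < n \<and> g \<in> stack (A i)},
        dcall = {(enc qs, a, enc (qs[i := q']), encs (i, g)) | qs i a q' g.
                   qs \<in> Q \<and> i < n \<and> (qs ! i, a, q', g) \<in> dcall (A i)},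
        dret = {(enc qs, a, map_option (\<lambda>g. encs (i, g)) og, enc (qs[i := q'])) | qs i a og q'.
                   qs \<in> Q \<and> i < n \<and> (qs ! i, a, og, q') \<in> dret (A i)},
        dint = {(enc qs, a, enc (qs[i := q'])) | qs i a q'.
                   qs \<in> Q \<and> i < n \<and> (qs ! i, a, q') \<in> dint (A i)}\<rparr>"

lemma calls_Sig: "calls Sig = (\<Union>i<n. calls (S i))"
  and rets_Sig: "rets Sig = (\<Union>i<n. rets (S i))"
  and ints_Sig: "ints Sig = (\<Union>i<n. ints (S i))"
  and letters_Sig: "letters Sig = (\<Union>i<n. letters (S i))"
  by (auto simp: union_alph_def calls_def rets_def ints_def letters_def)

lemma uniq: "k < n \<Longrightarrow> m < n \<Longrightarrow> a \<in> letters (S k) \<Longrightarrow> a \<in> letters (S m) \<Longrightarrow> k = m"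
  using disj by blast

lemma loc_calls: "k < n \<Longrightarrow> a \<in> letters (S k) \<Longrightarrow> a \<in> calls Sig \<longleftrightarrow> a \<in> calls (S k)"
  using uniq unfolding calls_Sig letters_def by blast
lemma loc_rets: "k < n \<Longrightarrow> a \<in> letters (S k) \<Longrightarrow> a \<in> rets Sig \<longleftrightarrow> a \<in> rets (S k)"
  using uniq unfolding rets_Sig letters_def by blast
lemma loc_ints: "k < n \<Longrightarrow> a \<in> letters (S k) \<Longrightarrow> a \<in> ints Sig \<longleftrightarrow> a \<in> ints (S k)"
  using uniq unfolding ints_Sig letters_def by blast

lemma alph_disj: "k < n \<Longrightarrow> calls (S k) \<inter> rets (S k) = {} \<and> calls (S k) \<inter> ints (S k) = {}
   \<and> rets (S k) \<inter> ints (S k) = {}"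
  using alph unfolding vp_alphabet_def by blast

lemma Sig_disj: "calls Sig \<inter> rets Sig = {}" "calls Sig \<inter> ints Sig = {}" "rets Sig \<inter> ints Sig = {}"
proof -
  have *: "a \<in> letters (S k)" if "k < n" "a \<in> calls (S k) \<or> a \<in> rets (S k) \<or> a \<in> ints (S k)" for a k
    using that by (auto simp: letters_def)
  show "calls Sig \<inter> rets Sig = {}"
    unfolding calls_Sig rets_Sig using uniq[OF _ _ *[of _ ] *] alph_disj by blast
  show "calls Sig \<inter> ints Sig = {}"
    unfolding calls_Sig ints_Sig using uniq[OF _ _ *[of _ ] *] alph_disj by blast
  show "rets Sig \<inter> ints Sig = {}"
    unfolding rets_Sig ints_Sig using uniq[OF _ _ *[of _ ] *] alph_disj by blast
qed

lemma finite_Q: "finite Q"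
proof -
  have fin: "finite (\<Union>i<n. states (A i))" using wf by (auto simp: vpa_wf_def)
  have "Q \<subseteq> {xs. set xs \<subseteq> (\<Union>i<n. states (A i)) \<and> length xs = n}"
    unfolding Q_def by (auto simp: in_set_conv_nth) (metis lessThan_iff)
  then show ?thesis using finite_lists_length_eq[OF fin] finite_subset by blast
qed

lemma Q_upd: "qs \<in> Q \<Longrightarrow> i < n \<Longrightarrow> q' \<in> states (A i) \<Longrightarrow> qs[i := q'] \<in> Q"
  unfolding Q_def by (auto simp: nth_list_update)

lemma wf_P: "vpa_wf Sig P"
proof -
  have fs: "finite (stack P)"
  proof -
    have "{(i, g). i < n \<and> g \<in> stack (A i)} = (\<Union>i<n. (\<lambda>g. (i, g)) ` stack (A i))" by auto
    moreover have "finite (\<Union>i<n. (\<lambda>g. (i, g)) ` stack (A i))" using wf by (auto simp: vpa_wf_def)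
    ultimately show ?thesis by (simp add: P_def)
  qed
  have c: "\<forall>(q,a,q',g) \<in> dcall P. q \<in> states P \<and> a \<in> calls Sig \<and> q' \<in> states P \<and> g \<in> stack P"
  proof (clarsimp simp: P_def)
    fix qs i a q' g assume h: "qs \<in> Q" "i < n" "(qs ! i, a, q', g) \<in> dcall (A i)"
    with wf[of i] have "a \<in> calls (S i)" "q' \<in> states (A i)" "g \<in> stack (A i)"
      unfolding vpa_wf_def by fast+
    with h show "a \<in> calls Sig \<and> enc (qs[i := q']) \<in> enc ` Q \<and> encs (i, g) \<in> encs ` {(i, g). i < n \<and> g \<in> stack (A i)}"
      using Q_upd by (auto simp: calls_Sig)
  qed
  have r: "\<forall>(q,a,g,q') \<in> dret P. q \<in> states P \<and> a \<in> rets Sig \<and> q' \<in> states P \<and>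
         (\<forall>h. g = Some h \<longrightarrow> h \<in> stack P)"
  proof -
    { fix qs i a og q' assume h: "qs \<in> Q" "i < n" "(qs ! i, a, og, q') \<in> dret (A i)"
      with wf[of i] have "a \<in> rets (S i)" "q' \<in> states (A i)" "\<forall>h. og = Some h \<longrightarrow> h \<in> stack (A i)"
        unfolding vpa_wf_def by fast+
      with h have "a \<in> rets Sig \<and> enc (qs[i := q']) \<in> enc ` Q \<and> (\<forall>h. map_option (\<lambda>g. encs (i, g)) og = Some h \<longrightarrow>
         h \<in> encs ` {(i, g). i < n \<and> g \<in> stack (A i)})"
        using Q_upd by (auto simp: rets_Sig) }
    then show ?thesis unfolding P_def by (clarsimp split: prod.splits)
  qed
  have t: "\<forall>(q,a,q') \<in> dint P. q \<in> states P \<and> a \<in> ints Sig \<and> q' \<in> states P"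
  proof (clarsimp simp: P_def)
    fix qs i a q' assume h: "qs \<in> Q" "i < n" "(qs ! i, a, q') \<in> dint (A i)"
    with wf[of i] have "a \<in> ints (S i)" "q' \<in> states (A i)"
      unfolding vpa_wf_def by fast+
    with h show "a \<in> ints Sig \<and> enc (qs[i := q']) \<in> enc ` Q"
      using Q_upd by (auto simp: ints_Sig)
  qed
  have "init P \<subseteq> states P" "final P \<subseteq> states P" "finite (states P)"
    using finite_Q by (auto simp: P_def)
  with fs c r t show ?thesis unfolding vpa_wf_def by blast
qed


definition proj :: "nat \<Rightarrow> (nat \<times> nat) list \<Rightarrow> nat list" where
  "proj i ps = map snd (filter (\<lambda>p. fst p = i) ps)"

definition filt :: "nat \<Rightarrow> 'a list \<Rightarrow> 'a list" where
  "filt i w = filter (\<lambda>a. a \<in> letters (S i)) w"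

lemma proj_simps[simp]: "proj i [] = []"
  "proj i ((j, g) # ps) = (if j = i then g # proj i ps else proj i ps)"
  by (auto simp: proj_def)

lemma step_dec:
  assumes st: "vpa_step Sig P a (enc qs, map encs ps) c" and qQ: "qs \<in> Q"
  shows "\<exists>k q' ps'. k < n \<and> a \<in> letters (S k) \<and> c = (enc (qs[k := q']), map encs ps') \<and>
     qs[k := q'] \<in> Q \<and> vpa_step (S k) (A k) a (qs ! k, proj k ps) (q', proj k ps') \<and>
     (\<forall>i. i \<noteq> k \<longrightarrow> proj i ps' = proj i ps) \<and>
     (a \<in> calls (S k) \<longrightarrow> (\<exists>g. ps' = (k, g) # ps)) \<and>
     (a \<in> rets (S k) \<longrightarrow> (ps = [] \<and> ps' = []) \<or> (\<exists>g. ps = (k, g) # ps'))"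
proof -
  from st consider
    (call) g where "a \<in> calls Sig" "(enc qs, a, fst c, g) \<in> dcall P" "snd c = g # map encs ps"
  | (ret0) "a \<in> rets Sig" "snd c = []" "ps = []" "(enc qs, a, None, fst c) \<in> dret P"
  | (ret1) g where "a \<in> rets Sig" "map encs ps = g # snd c" "(enc qs, a, Some g, fst c) \<in> dret P"
  | (int) "a \<in> ints Sig" "(enc qs, a, fst c) \<in> dint P" "snd c = map encs ps"
    unfolding vpa_step_def by auto
  then show ?thesis
  proof cases
    case call
    then obtain i q' g0 where h: "i < n" "(qs ! i, a, q', g0) \<in> dcall (A i)" "fst c = enc (qs[i := q'])"
      "g = encs (i, g0)"
      by (auto simp: P_def)
    with wf[of i] have ai: "a \<in> calls (S i)" "q' \<in> states (A i)"
      unfolding vpa_wf_def by fast+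
    have ad: "a \<notin> rets (S i)" "a \<notin> ints (S i)" using alph_disj[OF h(1)] ai by auto
    show ?thesis
      apply (rule exI[of _ i], rule exI[of _ q'], rule exI[of _ "(i, g0) # ps"])
      using h ai ad call Q_upd[OF qQ h(1) ai(2)]
      by (auto simp: letters_def vpa_step_def prod_eq_iff)
  next
    case ret0
    then obtain i q' where h: "i < n" "(qs ! i, a, None, q') \<in> dret (A i)" "fst c = enc (qs[i := q'])"
      by (auto simp: P_def)
    with wf[of i] have ai: "a \<in> rets (S i)" "q' \<in> states (A i)"
      unfolding vpa_wf_def by fast+
    show ?thesis
      apply (rule exI[of _ i], rule exI[of _ q'], rule exI[of _ "[]"])
      using h ai ret0 alph_disj[OF h(1)] Q_upd[OF qQ h(1) ai(2)]
      by (auto simp: letters_def vpa_step_def prod_eq_iff)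
  next
    case ret1
    from ret1(3) obtain i q' og where h0: "i < n" "(qs ! i, a, og, q') \<in> dret (A i)" "fst c = enc (qs[i := q'])"
      "Some g = map_option (\<lambda>g. encs (i, g)) og"
      by (auto simp: P_def)
    then obtain g0 where "og = Some g0" "g = encs (i, g0)" by (cases og) auto
    with h0 have h: "i < n" "(qs ! i, a, Some g0, q') \<in> dret (A i)" "fst c = enc (qs[i := q'])"
      "g = encs (i, g0)" by auto
    with wf[of i] have ai: "a \<in> rets (S i)" "q' \<in> states (A i)"
      unfolding vpa_wf_def by fast+
    have ad: "a \<notin> calls (S i)" using alph_disj[OF h(1)] ai by auto
    from ret1(2) h(4) obtain ps0 where ps: "ps = (i, g0) # ps0" "snd c = map encs ps0"
      by (cases ps) auto
    show ?thesis
      apply (rule exI[of _ i], rule exI[of _ q'], rule exI[of _ ps0])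
      using h ai ad ret1 ps Q_upd[OF qQ h(1) ai(2)]
      by (auto simp: letters_def vpa_step_def prod_eq_iff)
  next
    case int
    then obtain i q' where h: "i < n" "(qs ! i, a, q') \<in> dint (A i)" "fst c = enc (qs[i := q'])"
      by (auto simp: P_def)
    with wf[of i] have ai: "a \<in> ints (S i)" "q' \<in> states (A i)"
      unfolding vpa_wf_def by fast+
    have ad: "a \<notin> calls (S i)" "a \<notin> rets (S i)" using alph_disj[OF h(1)] ai by auto
    show ?thesis
      apply (rule exI[of _ i], rule exI[of _ q'], rule exI[of _ ps])
      using h ai ad int Q_upd[OF qQ h(1) ai(2)]
      by (auto simp: letters_def vpa_step_def prod_eq_iff)
  qed
qed


lemma Q_len: "qs \<in> Q \<Longrightarrow> length qs = n" by (simp add: Q_def)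

lemma filt_cons: "filt i (a # w) = (if a \<in> letters (S i) then a # filt i w else filt i w)"
  by (simp add: filt_def)

lemma run_dec:
  "vpa_run Sig P w (enc qs, map encs ps) c' \<Longrightarrow> qs \<in> Q \<Longrightarrow>
   \<exists>qs' ps'. c' = (enc qs', map encs ps') \<and> qs' \<in> Q \<and> set w \<subseteq> letters Sig \<and>
     (\<forall>i<n. vpa_run (S i) (A i) (filt i w) (qs ! i, proj i ps) (qs' ! i, proj i ps'))"
proof (induction w arbitrary: qs ps)
  case Nil
  then show ?case by (auto simp: filt_def)
next
  case (Cons a w)
  then obtain c'' where st: "vpa_step Sig P a (enc qs, map encs ps) c''" and r: "vpa_run Sig P w c'' c'"
    by auto
  from step_dec[OF st Cons.prems(2)] obtain k q' ps' where d: "k < n" "a \<in> letters (S k)"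
    "c'' = (enc (qs[k := q']), map encs ps')" "qs[k := q'] \<in> Q"
    "vpa_step (S k) (A k) a (qs ! k, proj k ps) (q', proj k ps')"
    "\<forall>i. i \<noteq> k \<longrightarrow> proj i ps' = proj i ps" by blast
  from Cons.IH[of "qs[k := q']" ps'] r d obtain qs' ps'' where
    ih: "c' = (enc qs', map encs ps'')" "qs' \<in> Q" "set w \<subseteq> letters Sig"
    "\<forall>i<n. vpa_run (S i) (A i) (filt i w) ((qs[k := q']) ! i, proj i ps') (qs' ! i, proj i ps'')"
    by auto
  have len: "length qs = n" using Cons.prems(2) Q_len by simp
  have "vpa_run (S i) (A i) (filt i (a # w)) (qs ! i, proj i ps) (qs' ! i, proj i ps'')" if "i < n" for i
  proof (cases "i = k")
    case True
    have h: "vpa_run (S k) (A k) (filt k w) (q', proj k ps') (qs' ! k, proj k ps'')"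
      using ih(4) d(1) len by fastforce
    then show ?thesis using True d(2,5) by (simp add: filt_cons) blast
  next
    case False
    then have "a \<notin> letters (S i)" using uniq[OF d(1) that d(2)] by blast
    then show ?thesis using ih(4) that d(6) False by (auto simp: filt_cons)
  qed
  moreover have "a \<in> letters Sig" using d(1,2) letters_Sig by blast
  ultimately show ?case using ih by auto
qed

lemma run_wn:
  assumes r: "vpa_run Sig P w (enc qs, map encs ps) c'" and qQ: "qs \<in> Q"
  shows "well_nested n S w"
  unfolding well_nested_def
proof (intro allI impI)
  fix i j assume m: "matched Sig w i j"
  define u where "u = take (j - i - 1) (drop (i + 1) w)"
  have ij: "i < j" "j < length w" "w ! i \<in> calls Sig" "w ! j \<in> rets Sig" "well_matched Sig u"
    using m by (auto simp: matched_def u_def)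
  have wdec: "w = take i w @ w ! i # u @ w ! j # drop (Suc j) w"
  proof -
    have "drop (Suc i) w = u @ drop (j - i - 1) (drop (Suc i) w)"
      unfolding u_def by (simp only: Suc_eq_plus1 append_take_drop_id)
    also have "drop (j - i - 1) (drop (Suc i) w) = drop j w" using ij by simp
    also have "drop j w = w ! j # drop (Suc j) w" using ij by (simp add: Cons_nth_drop_Suc)
    finally have "drop (Suc i) w = u @ w ! j # drop (Suc j) w" .
    moreover have "w = take i w @ w ! i # drop (Suc i) w" using ij by (simp add: id_take_nth_drop)
    ultimately show ?thesis by simp
  qed
  have r': "vpa_run Sig P (take i w @ w ! i # u @ w ! j # drop (Suc j) w) (enc qs, map encs ps) c'"
    using r by (simp only: wdec[symmetric])
  from r'[unfolded vpa_run_append vpa_run.simps(2)] obtain c1 c2 c3 c4 where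
    r1: "vpa_run Sig P (take i w) (enc qs, map encs ps) c1" and
    s1: "vpa_step Sig P (w ! i) c1 c2" and r2: "vpa_run Sig P u c2 c3" and
    s2: "vpa_step Sig P (w ! j) c3 c4"
    by blast
  from run_dec[OF r1 qQ] obtain qs1 ps1 where c1: "c1 = (enc qs1, map encs ps1)" "qs1 \<in> Q" by blast
  from step_dec[OF s1[unfolded c1(1)] c1(2)] obtain k q' ps2 where
    d1: "k < n" "w ! i \<in> letters (S k)" "c2 = (enc (qs1[k := q']), map encs ps2)" "qs1[k := q'] \<in> Q"
    "w ! i \<in> calls (S k) \<longrightarrow> (\<exists>g. ps2 = (k, g) # ps1)" by blast
  have "w ! i \<in> calls (S k)" using loc_calls[OF d1(1,2)] ij(3) by simp
  with d1 obtain g where ps2: "ps2 = (k, g) # ps1" by blast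
  from run_dec[OF r2[unfolded d1(3)] d1(4)] obtain qs3 ps3 where c3: "c3 = (enc qs3, map encs ps3)" "qs3 \<in> Q"
    by blast
  have "snd c3 = snd c2"
    using wm_stack[OF ij(5) Sig_disj r2] .
  then have "map encs ps3 = map encs ((k, g) # ps1)" using c3 d1(3) ps2 by simp
  then have ps3: "ps3 = (k, g) # ps1" by (rule inj_map_eq_map[OF inj_encs, THEN iffD1])
  from step_dec[OF s2[unfolded c3(1)] c3(2)] obtain k' where
    d2: "k' < n" "w ! j \<in> letters (S k')"
    "w ! j \<in> rets (S k') \<longrightarrow> (ps3 = [] \<and> True) \<or> (\<exists>g ps'. ps3 = (k', g) # ps')" by fastforce
  have "w ! j \<in> rets (S k')" using loc_rets[OF d2(1,2)] ij(4) by simp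
  with d2 ps3 have "k' = k" by auto
  with d1 d2 show "\<exists>k<n. w ! i \<in> letters (S k) \<and> w ! j \<in> letters (S k)" by blast
qed


definition comp :: "'a \<Rightarrow> nat" where
  "comp a = (SOME k. k < n \<and> a \<in> letters (S k))"

lemma comp_eq: "k < n \<Longrightarrow> a \<in> letters (S k) \<Longrightarrow> comp a = k"
  unfolding comp_def by (rule some_equality) (auto intro: uniq)

lemma stepf_simps: "a \<in> calls Sig \<Longrightarrow> stepf Sig a s = a # s"
  "a \<notin> calls Sig \<Longrightarrow> a \<in> rets Sig \<Longrightarrow> stepf Sig a s = tl s"
  "a \<notin> calls Sig \<Longrightarrow> a \<notin> rets Sig \<Longrightarrow> stepf Sig a s = s"
  by (auto simp: stepf_def)

lemma complete:
  "set w \<subseteq> letters Sig \<Longrightarrow> well_nested n S (x @ w) \<Longrightarrow> set x \<subseteq> letters Sig \<Longrightarrow>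
   map fst ps = map comp (fold (stepf Sig) x []) \<Longrightarrow> qs \<in> Q \<Longrightarrow>
   (\<forall>i<n. vpa_run (S i) (A i) (filt i w) (qs ! i, proj i ps) (qf i, sf i)) \<Longrightarrow>
   \<exists>stk. vpa_run Sig P w (enc qs, map encs ps) (enc (map qf [0..<n]), stk)"
proof (induction w arbitrary: x qs ps)
  case Nil
  have "qs = map qf [0..<n]"
    using Nil.prems(5,6) Q_len by (auto simp: filt_def intro: nth_equalityI)
  then show ?case by auto
next
  case (Cons a w)
  from Cons.prems(1) obtain k where k: "k < n" "a \<in> letters (S k)" using letters_Sig by auto
  have len: "length qs = n" using Cons.prems(5) Q_len by simp
  have ck: "comp a = k" using comp_eq k by simp
  from Cons.prems(6) k obtain q' \<sigma>' where
    stk: "vpa_step (S k) (A k) a (qs ! k, proj k ps) (q', \<sigma>')" and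
    rk: "vpa_run (S k) (A k) (filt k w) (q', \<sigma>') (qf k, sf k)"
    by (fastforce simp: filt_cons)
  have gen: "\<exists>stk. vpa_run Sig P (a # w) (enc qs, map encs ps) (enc (map qf [0..<n]), stk)"
    if st: "vpa_step Sig P a (enc qs, map encs ps) (enc (qs[k := q']), map encs ps')"
    and qQ: "qs[k := q'] \<in> Q" and f: "map fst ps' = map comp (fold (stepf Sig) (x @ [a]) [])"
    and pk: "proj k ps' = \<sigma>'" and po: "\<forall>i. i \<noteq> k \<longrightarrow> proj i ps' = proj i ps" for ps'
  proof -
    have "\<forall>i<n. vpa_run (S i) (A i) (filt i w) ((qs[k := q']) ! i, proj i ps') (qf i, sf i)"
    proof (intro allI impI)
      fix i assume i: "i < n"
      show "vpa_run (S i) (A i) (filt i w) ((qs[k := q']) ! i, proj i ps') (qf i, sf i)"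
      proof (cases "i = k")
        case True
        then show ?thesis using rk pk len k by simp
      next
        case False
        then have "a \<notin> letters (S i)" using uniq[OF k(1) i k(2)] by blast
        then show ?thesis using Cons.prems(6) i po False by (auto simp: filt_cons)
      qed
    qed
    moreover have "well_nested n S ((x @ [a]) @ w)" using Cons.prems(2) by simp
    moreover have "set (x @ [a]) \<subseteq> letters Sig" using Cons.prems(1,3) by auto
    ultimately obtain stk where "vpa_run Sig P w (enc (qs[k := q']), map encs ps') (enc (map qf [0..<n]), stk)"
      using Cons.IH[where x="x @ [a]" and qs="qs[k := q']" and ps=ps'] Cons.prems(1) qQ f by auto
    with st show ?thesis by auto
  qed
  have kd: "calls (S k) \<inter> rets (S k) = {}" "calls (S k) \<inter> ints (S k) = {}" "rets (S k) \<inter> ints (S k) = {}"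
    using alph_disj[OF k(1)] by auto
  consider "a \<in> calls (S k)" | "a \<in> rets (S k)" | "a \<in> ints (S k)" using k(2) by (auto simp: letters_def)
  then show ?case
  proof cases
    case 1
    from stk 1 kd obtain g where tr: "(qs ! k, a, q', g) \<in> dcall (A k)" "\<sigma>' = g # proj k ps"
      unfolding vpa_step_def by auto
    have q's: "q' \<in> states (A k)" using wf[OF k(1)] tr unfolding vpa_wf_def by fast
    have aS: "a \<in> calls Sig" using loc_calls[OF k] 1 by simp
    show ?thesis
    proof (rule gen[of "(k, g) # ps"])
      show "vpa_step Sig P a (enc qs, map encs ps) (enc (qs[k := q']), map encs ((k, g) # ps))"
        unfolding vpa_step_def using aS tr k Cons.prems(5) by (auto simp: P_def)
      show "qs[k := q'] \<in> Q" using Q_upd Cons.prems(5) k q's by blast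
      show "map fst ((k, g) # ps) = map comp (fold (stepf Sig) (x @ [a]) [])"
        using Cons.prems(4) aS ck by (simp add: stepf_simps)
    qed (use tr in auto)
  next
    case 2
    have aS: "a \<in> rets Sig" "a \<notin> calls Sig" using loc_rets[OF k] loc_calls[OF k] 2 kd by auto
    show ?thesis
    proof (cases ps)
      case Nil
      from stk 2 kd Nil have tr: "(qs ! k, a, None, q') \<in> dret (A k)" "\<sigma>' = []"
        unfolding vpa_step_def by auto
      have q's: "q' \<in> states (A k)" using wf[OF k(1)] tr unfolding vpa_wf_def by fast
      have fx: "fold (stepf Sig) x [] = []" using Cons.prems(4) Nil by simp
      show ?thesis
      proof (rule gen[of "[]"])
        have "(enc qs, a, map_option (\<lambda>g. encs (k, g)) None, enc (qs[k := q'])) \<in> dret P"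
          using tr k Cons.prems(5) unfolding P_def by auto
        then show "vpa_step Sig P a (enc qs, map encs ps) (enc (qs[k := q']), map encs [])"
          unfolding vpa_step_def using aS Nil by auto
        show "qs[k := q'] \<in> Q" using Q_upd Cons.prems(5) k q's by blast
        show "map fst [] = map comp (fold (stepf Sig) (x @ [a]) [])"
          using fx aS by (simp add: stepf_simps)
      qed (use tr Nil in auto)
    next
      case (Cons p ps0)
      obtain t g' where p: "p = (t, g')" by (cases p)
      from Cons.prems(4) Cons p obtain c rest where fx: "fold (stepf Sig) x [] = c # rest"
        "comp c = t" "map fst ps0 = map comp rest"
        by (cases "fold (stepf Sig) x []") auto
      from pending_decomp[OF Cons.prems(3) fx(1)] obtain x1 u where
        xu: "x = x1 @ c # u" "well_matched Sig u" "c \<in> calls Sig" by blast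
      have "matched Sig (x @ a # w) (length x1) (length x)"
        unfolding matched_def using xu aS by (simp add: nth_append)
      with Cons.prems(2) have "\<exists>k'<n. (x @ a # w) ! (length x1) \<in> letters (S k') \<and>
          (x @ a # w) ! (length x) \<in> letters (S k')"
        unfolding well_nested_def by blast
      moreover have "(x @ a # w) ! (length x1) = c" "(x @ a # w) ! (length x) = a"
        using xu(1) by (simp_all add: nth_append)
      ultimately obtain k' where k': "k' < n" "c \<in> letters (S k')" "a \<in> letters (S k')"
        by auto
      have "k' = k" using uniq[OF k' (1) k(1) k'(3) k(2)] .
      then have t: "t = k" using comp_eq[OF k'(1,2)] fx(2) by simp
      have pk: "proj k ps = g' # proj k ps0" using Cons p t by simp
      from stk 2 kd pk have tr: "(qs ! k, a, Some g', q') \<in> dret (A k)" "\<sigma>' = proj k ps0"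
        unfolding vpa_step_def by auto
      have q's: "q' \<in> states (A k)" using wf[OF k(1)] tr unfolding vpa_wf_def by fast
      show ?thesis
      proof (rule gen[of ps0])
        have "(enc qs, a, map_option (\<lambda>g. encs (k, g)) (Some g'), enc (qs[k := q'])) \<in> dret P"
          using tr k Cons.prems(5) unfolding P_def vpa.select_convs mem_Collect_eq by blast
        then show "vpa_step Sig P a (enc qs, map encs ps) (enc (qs[k := q']), map encs ps0)"
          unfolding vpa_step_def using aS Cons p t by auto
        show "qs[k := q'] \<in> Q" using Q_upd Cons.prems(5) k q's by blast
        show "map fst ps0 = map comp (fold (stepf Sig) (x @ [a]) [])"
          using fx aS by (simp add: stepf_simps)
      qed (use tr Cons p t in auto)
    qed
  next
    case 3
    from stk 3 kd have tr: "(qs ! k, a, q') \<in> dint (A k)" "\<sigma>' = proj k ps"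
      unfolding vpa_step_def by auto
    have q's: "q' \<in> states (A k)" using wf[OF k(1)] tr unfolding vpa_wf_def by fast
    have aS: "a \<in> ints Sig" "a \<notin> calls Sig" "a \<notin> rets Sig"
      using loc_ints[OF k] loc_rets[OF k] loc_calls[OF k] 3 kd by auto
    show ?thesis
    proof (rule gen[of ps])
      show "vpa_step Sig P a (enc qs, map encs ps) (enc (qs[k := q']), map encs ps)"
        unfolding vpa_step_def using aS tr k Cons.prems(5) by (auto simp: P_def)
      show "qs[k := q'] \<in> Q" using Q_upd Cons.prems(5) k q's by blast
      show "map fst ps = map comp (fold (stepf Sig) (x @ [a]) [])"
        using Cons.prems(4) aS by (simp add: stepf_simps)
    qed (use tr in auto)
  qed
qed


lemma lang_P:
  assumes lang: "\<And>i. i < n \<Longrightarrow> vpa_lang (S i) (A i) = L i"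
  shows "vpa_lang Sig P = wn_shuffle n S L"
proof
  show "vpa_lang Sig P \<subseteq> wn_shuffle n S L"
  proof
    fix w assume "w \<in> vpa_lang Sig P"
    then obtain qs0 qsf s where q0: "qs0 \<in> Q" "\<forall>i<n. qs0 ! i \<in> init (A i)"
      and qf: "qsf \<in> Q" "\<forall>i<n. qsf ! i \<in> final (A i)"
      and r: "vpa_run Sig P w (enc qs0, map encs []) (enc qsf, s)"
      unfolding vpa_lang_def by (auto simp: P_def)
    from run_dec[OF r q0(1)] obtain ps' where
      d: "s = map encs ps'" "set w \<subseteq> letters Sig"
      "\<forall>i<n. vpa_run (S i) (A i) (filt i w) (qs0 ! i, proj i []) (qsf ! i, proj i ps')"
      by auto
    have "filter (\<lambda>a. a \<in> letters (S i)) w \<in> L i" if "i < n" for i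
    proof -
      have "filt i w \<in> vpa_lang (S i) (A i)"
        unfolding vpa_lang_def using d(3) q0(2) qf(2) that by fastforce
      then show ?thesis using lang[OF that] by (simp add: filt_def)
    qed
    moreover have "well_nested n S w" using run_wn[OF r q0(1)] .
    ultimately show "w \<in> wn_shuffle n S L"
      using d(2) by (auto simp: wn_shuffle_def shuffle_def)
  qed
next
  show "wn_shuffle n S L \<subseteq> vpa_lang Sig P"
  proof
    fix w assume w: "w \<in> wn_shuffle n S L"
    then have wl: "set w \<subseteq> letters Sig" and wn: "well_nested n S w"
      and wL: "\<forall>i<n. filt i w \<in> vpa_lang (S i) (A i)"
      using lang by (auto simp: wn_shuffle_def shuffle_def filt_def)
    have "\<forall>i. \<exists>t. i < n \<longrightarrow> fst t \<in> init (A i) \<and> fst (snd t) \<in> final (A i) \<and>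
       vpa_run (S i) (A i) (filt i w) (fst t, []) (fst (snd t), snd (snd t))"
    proof
      fix i
      show "\<exists>t. i < n \<longrightarrow> fst t \<in> init (A i) \<and> fst (snd t) \<in> final (A i) \<and>
       vpa_run (S i) (A i) (filt i w) (fst t, []) (fst (snd t), snd (snd t))"
      proof (cases "i < n")
        case True
        with wL obtain a b c where "a \<in> init (A i)" "b \<in> final (A i)"
          "vpa_run (S i) (A i) (filt i w) (a, []) (b, c)"
          unfolding vpa_lang_def by blast
        then show ?thesis by (intro exI[of _ "(a, b, c)"]) simp
      qed simp
    qed
    then obtain F where F: "\<And>i. i < n \<Longrightarrow> fst (F i) \<in> init (A i) \<and> fst (snd (F i)) \<in> final (A i) \<and>
       vpa_run (S i) (A i) (filt i w) (fst (F i), []) (fst (snd (F i)), snd (snd (F i)))"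
      by (metis choice)
    define qs0 where "qs0 = map (\<lambda>i. fst (F i)) [0..<n]"
    define qf where "qf = (\<lambda>i. fst (snd (F i)))"
    define sf where "sf = (\<lambda>i. snd (snd (F i)))"
    have ist: "init (A i) \<subseteq> states (A i)" "final (A i) \<subseteq> states (A i)" if "i < n" for i
      using wf[OF that] unfolding vpa_wf_def by auto
    have q0Q: "qs0 \<in> Q" using F ist unfolding qs0_def Q_def by auto
    have "\<forall>i<n. vpa_run (S i) (A i) (filt i w) (qs0 ! i, proj i []) (qf i, sf i)"
      using F unfolding qs0_def qf_def sf_def by auto
    from complete[of w "[]" "[]" qs0 qf sf] this wl wn q0Q obtain stk where
      r: "vpa_run Sig P w (enc qs0, map encs []) (enc (map qf [0..<n]), stk)"
      by auto
    have "enc qs0 \<in> init P" using q0Q F unfolding P_def qs0_def by auto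
    moreover have "map qf [0..<n] \<in> {qs \<in> Q. \<forall>i<n. qs ! i \<in> final (A i)}"
    proof -
      have "\<forall>i<n. qf i \<in> final (A i) \<and> qf i \<in> states (A i)"
        using F ist unfolding qf_def by blast
      then show ?thesis unfolding Q_def by auto
    qed
    then have "enc (map qf [0..<n]) \<in> final P"
      unfolding P_def by simp
    ultimately show "w \<in> vpa_lang Sig P"
      using r unfolding vpa_lang_def by auto
  qed
qed

end

theorem theorem4p2:
  fixes n :: nat and S :: "nat \<Rightarrow> 'a vpalph" and L :: "nat \<Rightarrow> 'a list set"
  assumes "\<And>i. i < n \<Longrightarrow> vp_alphabet (S i)"
    and "\<And>i j. i < n \<Longrightarrow> j < n \<Longrightarrow> i \<noteq> j \<Longrightarrow> letters (S i) \<inter> letters (S j) = {}"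
    and "\<And>i. i < n \<Longrightarrow> L i \<subseteq> lists (letters (S i))"
    and "\<And>i. i < n \<Longrightarrow> vpl (S i) (L i)"
  shows "vpl (union_alph n S) (wn_shuffle n S L)"
proof -
  have "\<forall>i. \<exists>B. i < n \<longrightarrow> vpa_wf (S i) B \<and> vpa_lang (S i) B = L i"
    using assms(4) unfolding vpl_def by blast
  then obtain AA where AA: "\<And>i. i < n \<Longrightarrow> vpa_wf (S i) (AA i) \<and> vpa_lang (S i) (AA i) = L i"
    by (metis choice)
  interpret pv: prodvpa n S AA
    using assms(1,2) AA by unfold_locales auto
  show ?thesis
    unfolding vpl_def using pv.wf_P pv.lang_P AA by blast
qed

end
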